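(* For each $\psi\in(-\pi,\pi]$ and each $\tau>0$, $$\{(a,w)\in D_c : \operatorname{Arg}(w)=\psi,\ \tau_c(a,w)>\tau\} = \bigcup_{s>1}\frac{1}{s}\Gamma_c(\psi;\tau),$$ and consequently $$\{(a,w)\in D_c : \tau_c(a,w)>\tau\} = \bigcup_{\psi\in(-\pi,\pi]}\bigcup_{s>1}\frac{1}{s}\Gamma_c(\psi;\tau).$$
   Context: $\operatorname{Arg}(w)\in(-\pi,\pi]$ is the principal argument; $\arccos:[-1,1]\to[0,\pi]$. $D_c := \{(a,w)\in\mathbb{R}\times(\mathbb{C}\setminus\{0\}):\operatorname{Re}(w)<a<|w|\}$; $\tau_c(a,w) := \frac{1}{\sqrt{|w|^2-a^2}}[|\operatorname{Arg}(w)|-\arccos(a/|w|)]$. $a(\Omega,\psi;\tau) := -\Omega\cot(\tau\Omega-\psi)$, $\rho(\Omega,\psi;\tau) := -\Omega/\sin(\tau\Omega-\psi)$. $I_c(\psi) := (0,\psi)$ if $\psi\ge0$ and $(\psi,0)$ if $\psi\le0$. $\Gamma_c(\psi;\tau) := \{(a(\Omega,\psi;\tau),\,\rho(\Omega,\psi;\tau)e^{i\psi}) : \tau\Omega\in I_c(\psi)\}$, and $\frac1s\Gamma := \{(a/s,w/s):(a,w)\in\Gamma\}$. *)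

theory Defs
  imports "HOL-Analysis.Analysis"
begin

definition D_c :: "(real \<times> complex) set" where
  "D_c = {(a, w). w \<noteq> 0 \<and> Re w < a \<and> a < cmod w}"

definition tau_c :: "real \<Rightarrow> complex \<Rightarrow> real" where
  "tau_c a w = (1 / sqrt ((cmod w)\<^sup>2 - a\<^sup>2)) * (\<bar>Arg w\<bar> - arccos (a / cmod w))"

definition a_fun :: "real \<Rightarrow> real \<Rightarrow> real \<Rightarrow> real" where
  "a_fun \<Omega> \<psi> \<tau> = - \<Omega> * cot (\<tau> * \<Omega> - \<psi>)"

definition rho_fun :: "real \<Rightarrow> real \<Rightarrow> real \<Rightarrow> real" where
  "rho_fun \<Omega> \<psi> \<tau> = - \<Omega> / sin (\<tau> * \<Omega> - \<psi>)"

definition I_c :: "real \<Rightarrow> real set" where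
  "I_c \<psi> = (if \<psi> \<ge> 0 then {0<..<\<psi>} else {\<psi><..<0})"

definition Gamma_c :: "real \<Rightarrow> real \<Rightarrow> (real \<times> complex) set" where
  "Gamma_c \<psi> \<tau> = {(a_fun \<Omega> \<psi> \<tau>, complex_of_real (rho_fun \<Omega> \<psi> \<tau>) * cis \<psi>) | \<Omega>. \<tau> * \<Omega> \<in> I_c \<psi>}"

definition scale_set :: "real \<Rightarrow> (real \<times> complex) set \<Rightarrow> (real \<times> complex) set" where
  "scale_set s \<Gamma> = {(a / s, w / complex_of_real s) | a w. (a, w) \<in> \<Gamma>}"

end

theory Submission
  imports Defs
begin

lemma polar_point:
  fixes r \<theta> \<psi> :: real
  assumes r: "r > 0" and th: "0 < \<theta>" "\<theta> < \<bar>\<psi>\<bar>" and ps: "-pi < \<psi>" "\<psi> \<le> pi"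
  shows "(r * cos \<theta>, complex_of_real r * cis \<psi>) \<in> D_c"
    and "Arg (complex_of_real r * cis \<psi>) = \<psi>"
    and "tau_c (r * cos \<theta>) (complex_of_real r * cis \<psi>) = (\<bar>\<psi>\<bar> - \<theta>) / (r * sin \<theta>)"
proof -
  have apl: "\<bar>\<psi>\<bar> \<le> pi" using ps by auto
  have thpi: "\<theta> < pi" using th apl by auto
  have st: "sin \<theta> > 0" using th thpi by (simp add: sin_gt_zero)
  have nrm: "cmod (complex_of_real r * cis \<psi>) = r" using r by (simp add: norm_mult)
  have cpsi: "cos \<psi> = cos \<bar>\<psi>\<bar>" by (simp add: abs_if)
  have "cos \<bar>\<psi>\<bar> < cos \<theta>" using th apl by (intro cos_monotone_0_pi) auto
  moreover have "cos \<theta> < 1" using th thpi cos_monotone_0_pi[of 0 \<theta>] by simp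
  ultimately have c1: "r * cos \<psi> < r * cos \<theta>" and c2: "r * cos \<theta> < r * 1"
    using r cpsi by (simp_all only: mult_strict_left_mono)
  have "Re (complex_of_real r * cis \<psi>) = r * cos \<psi>" by simp
  moreover have "complex_of_real r * cis \<psi> \<noteq> 0" using r by simp
  ultimately show "(r * cos \<theta>, complex_of_real r * cis \<psi>) \<in> D_c"
    unfolding D_c_def using c1 c2 nrm by simp
  show "Arg (complex_of_real r * cis \<psi>) = \<psi>" using r ps by (simp add: Arg_cis)
  have ac: "arccos (r * cos \<theta> / r) = \<theta>" using r th thpi by (simp add: arccos_cos)
  have "sqrt (r\<^sup>2 - (r * cos \<theta>)\<^sup>2) = sqrt ((r * sin \<theta>)\<^sup>2)"
  proof -
    have "(sin \<theta>)\<^sup>2 = 1 - (cos \<theta>)\<^sup>2" by (rule sin_squared_eq)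
    then show ?thesis by (simp add: power_mult_distrib right_diff_distrib)
  qed
  also have "\<dots> = r * sin \<theta>" using r st by simp
  finally have sq: "sqrt (r\<^sup>2 - (r * cos \<theta>)\<^sup>2) = r * sin \<theta>" .
  show "tau_c (r * cos \<theta>) (complex_of_real r * cis \<psi>) = (\<bar>\<psi>\<bar> - \<theta>) / (r * sin \<theta>)"
    unfolding tau_c_def nrm sq ac using r ps by (simp add: Arg_cis)
qed


lemma decomp:
  assumes "(a, w) \<in> D_c"
  shows "cmod w > 0" "0 < arccos (a / cmod w)" "arccos (a / cmod w) < \<bar>Arg w\<bar>"
    "a = cmod w * cos (arccos (a / cmod w))" "w = complex_of_real (cmod w) * cis (Arg w)"
proof -
  have w0: "w \<noteq> 0" and lo: "Re w < a" and hi: "a < cmod w" using assms by (auto simp: D_c_def)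
  show r: "cmod w > 0" using w0 by simp
  show weq: "w = complex_of_real (cmod w) * cis (Arg w)" using rcis_cmod_Arg[of w] by (simp add: rcis_def)
  have "Re w = cmod w * cos (Arg w)" by (subst weq) simp
  also have "cos (Arg w) = cos \<bar>Arg w\<bar>" by (simp add: abs_if)
  finally have "cmod w * cos \<bar>Arg w\<bar> < a" using lo by simp
  hence c1: "cos \<bar>Arg w\<bar> < a / cmod w" using r by (simp add: field_simps)
  have c2: "a / cmod w < 1" using hi r by (simp add: field_simps)
  have c0: "-1 \<le> a / cmod w" using c1 cos_ge_minus_one[of "\<bar>Arg w\<bar>"] by linarith
  have ab: "\<bar>Arg w\<bar> \<le> pi" using mpi_less_Arg[of w] Arg_le_pi[of w] by auto
  have "arccos (a / cmod w) < arccos (cos \<bar>Arg w\<bar>)"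
    by (rule arccos_less_arccos) (use c1 c2 in auto)
  also have "\<dots> = \<bar>Arg w\<bar>" by (rule arccos_cos) (use ab in auto)
  finally show "arccos (a / cmod w) < \<bar>Arg w\<bar>" .
  have "arccos 1 < arccos (a / cmod w)"
    by (rule arccos_less_arccos) (use c0 c2 in auto)
  thus "0 < arccos (a / cmod w)" by simp
  have "cos (arccos (a / cmod w)) = a / cmod w"
    using c0 c2 by (intro cos_arccos) auto
  thus "a = cmod w * cos (arccos (a / cmod w))" using r by simp
qed

lemma gamma_param:
  assumes "\<tau> > 0" "\<tau> * \<Omega> \<in> I_c \<psi>" "\<psi> \<le> pi"
  shows "0 < \<bar>\<psi>\<bar> - \<tau> * \<bar>\<Omega>\<bar>" "\<bar>\<psi>\<bar> - \<tau> * \<bar>\<Omega>\<bar> < \<bar>\<psi>\<bar>" "\<bar>\<Omega>\<bar> > 0"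
    "a_fun \<Omega> \<psi> \<tau> = \<bar>\<Omega>\<bar> * cos (\<bar>\<psi>\<bar> - \<tau> * \<bar>\<Omega>\<bar>) / sin (\<bar>\<psi>\<bar> - \<tau> * \<bar>\<Omega>\<bar>)"
    "rho_fun \<Omega> \<psi> \<tau> = \<bar>\<Omega>\<bar> / sin (\<bar>\<psi>\<bar> - \<tau> * \<bar>\<Omega>\<bar>)"
proof -
  consider "\<psi> > 0" "0 < \<tau> * \<Omega>" "\<tau> * \<Omega> < \<psi>" | "\<psi> < 0" "\<psi> < \<tau> * \<Omega>" "\<tau> * \<Omega> < 0"
    using assms(2) by (auto simp: I_c_def split: if_splits)
  then have all: "0 < \<bar>\<psi>\<bar> - \<tau> * \<bar>\<Omega>\<bar> \<and> \<bar>\<psi>\<bar> - \<tau> * \<bar>\<Omega>\<bar> < \<bar>\<psi>\<bar> \<and> \<bar>\<Omega>\<bar> > 0 \<and>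
    a_fun \<Omega> \<psi> \<tau> = \<bar>\<Omega>\<bar> * cos (\<bar>\<psi>\<bar> - \<tau> * \<bar>\<Omega>\<bar>) / sin (\<bar>\<psi>\<bar> - \<tau> * \<bar>\<Omega>\<bar>) \<and>
    rho_fun \<Omega> \<psi> \<tau> = \<bar>\<Omega>\<bar> / sin (\<bar>\<psi>\<bar> - \<tau> * \<bar>\<Omega>\<bar>)"
  proof cases
    case 1
    then have "\<Omega> > 0" using assms(1) by (simp add: zero_less_mult_iff)
    then have e: "\<bar>\<psi>\<bar> - \<tau> * \<bar>\<Omega>\<bar> = - (\<tau> * \<Omega> - \<psi>)" using 1 by simp
    have s1: "sin (\<psi> - \<tau> * \<Omega>) = - sin (\<tau> * \<Omega> - \<psi>)" by (metis minus_diff_eq sin_minus)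
    have c1: "cos (\<psi> - \<tau> * \<Omega>) = cos (\<tau> * \<Omega> - \<psi>)" by (metis minus_diff_eq cos_minus)
    have "\<psi> \<le> pi" using assms by auto
    have "sin (\<psi> - \<tau> * \<Omega>) > 0" using 1 \<open>\<psi> \<le> pi\<close> by (intro sin_gt_zero) auto
    show ?thesis using 1 \<open>\<Omega> > 0\<close> \<open>sin (\<psi> - \<tau> * \<Omega>) > 0\<close> unfolding e a_fun_def rho_fun_def
      by (simp add: cot_def s1 c1 divide_simps)
  next
    case 2
    then have "\<Omega> < 0" using assms(1) by (simp add: mult_less_0_iff)
    then have e: "\<bar>\<psi>\<bar> - \<tau> * \<bar>\<Omega>\<bar> = \<tau> * \<Omega> - \<psi>" using 2 by simp
    show ?thesis using 2 \<open>\<Omega> < 0\<close> unfolding e a_fun_def rho_fun_def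
      by (simp add: cot_def divide_simps)
  qed
  then show "0 < \<bar>\<psi>\<bar> - \<tau> * \<bar>\<Omega>\<bar>" "\<bar>\<psi>\<bar> - \<tau> * \<bar>\<Omega>\<bar> < \<bar>\<psi>\<bar>" "\<bar>\<Omega>\<bar> > 0"
    "a_fun \<Omega> \<psi> \<tau> = \<bar>\<Omega>\<bar> * cos (\<bar>\<psi>\<bar> - \<tau> * \<bar>\<Omega>\<bar>) / sin (\<bar>\<psi>\<bar> - \<tau> * \<bar>\<Omega>\<bar>)"
    "rho_fun \<Omega> \<psi> \<tau> = \<bar>\<Omega>\<bar> / sin (\<bar>\<psi>\<bar> - \<tau> * \<bar>\<Omega>\<bar>)" by auto
qed

lemma mem_scale:
  "(x, y) \<in> scale_set s (Gamma_c \<psi> \<tau>) \<longleftrightarrow>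
   (\<exists>\<Omega>. \<tau> * \<Omega> \<in> I_c \<psi> \<and> x = a_fun \<Omega> \<psi> \<tau> / s \<and>
        y = complex_of_real (rho_fun \<Omega> \<psi> \<tau>) * cis \<psi> / complex_of_real s)"
  by (auto simp: scale_set_def Gamma_c_def)


lemma cis_div:
  "complex_of_real x * cis \<psi> / complex_of_real s = complex_of_real (x / s) * cis \<psi>"
  by (simp add: of_real_divide times_divide_eq_left)

lemma main_psi:
  fixes \<psi> \<tau> :: real
  assumes ps: "-pi < \<psi>" "\<psi> \<le> pi" and tp: "\<tau> > 0"
  shows "{(a, w) \<in> D_c. Arg w = \<psi> \<and> tau_c a w > \<tau>} = (\<Union>s\<in>{1<..}. scale_set s (Gamma_c \<psi> \<tau>))"
proof (intro equalityI subsetI)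
  fix p assume "p \<in> {(a, w) \<in> D_c. Arg w = \<psi> \<and> tau_c a w > \<tau>}"
  then obtain a w where p: "p = (a, w)" and D: "(a, w) \<in> D_c" and A: "Arg w = \<psi>"
    and T: "tau_c a w > \<tau>" by auto
  define r where "r = cmod w"
  define \<theta> where "\<theta> = arccos (a / cmod w)"
  have r0: "r > 0" and t0: "0 < \<theta>" and t1: "\<theta> < \<bar>\<psi>\<bar>" and aeq: "a = r * cos \<theta>"
    and weq: "w = complex_of_real r * cis \<psi>"
    using decomp[OF D] A unfolding r_def \<theta>_def by auto
  have st: "sin \<theta> > 0" using t0 t1 ps by (intro sin_gt_zero) auto
  have tc: "tau_c a w = (\<bar>\<psi>\<bar> - \<theta>) / (r * sin \<theta>)"
    unfolding aeq weq by (rule polar_point(3)[OF r0 t0 t1 ps])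
  define m where "m = (\<bar>\<psi>\<bar> - \<theta>) / \<tau>"
  define s where "s = tau_c a w / \<tau>"
  define \<Omega> where "\<Omega> = (if \<psi> \<ge> 0 then m else - m)"
  have m0: "m > 0" using t1 tp by (simp add: m_def)
  have s1: "s > 1" using T tp by (simp add: s_def)
  have sm: "s = m / (r * sin \<theta>)" unfolding s_def tc m_def by (simp add: field_simps)
  have psi0: "\<psi> \<noteq> 0" using t0 t1 by auto
  have tm: "\<tau> * m = \<bar>\<psi>\<bar> - \<theta>" using tp by (simp add: m_def)
  have I: "\<tau> * \<Omega> \<in> I_c \<psi>"
    using psi0 t0 t1 tm unfolding I_c_def \<Omega>_def by (auto simp: abs_if)
  have absO: "\<bar>\<Omega>\<bar> = m" using m0 by (simp add: \<Omega>_def)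
  have th: "\<bar>\<psi>\<bar> - \<tau> * \<bar>\<Omega>\<bar> = \<theta>" using tm absO by simp
  have th': "\<bar>\<psi>\<bar> - \<tau> * m = \<theta>" using tm by simp
  note gp = gamma_param[OF tp I ps(2)]
  have xa: "a = a_fun \<Omega> \<psi> \<tau> / s" unfolding gp(4) th absO sm aeq th' using m0 r0 st
    by (simp add: field_simps)
  have "rho_fun \<Omega> \<psi> \<tau> / s = r" unfolding gp(5) th absO sm th' using m0 r0 st
    by (simp add: field_simps)
  hence yw: "w = complex_of_real (rho_fun \<Omega> \<psi> \<tau>) * cis \<psi> / complex_of_real s"
    unfolding cis_div weq by simp
  have "(a, w) \<in> scale_set s (Gamma_c \<psi> \<tau>)" unfolding mem_scale using I xa yw by blast
  then show "p \<in> (\<Union>s\<in>{1<..}. scale_set s (Gamma_c \<psi> \<tau>))" using s1 p by auto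
next
  fix p assume "p \<in> (\<Union>s\<in>{1<..}. scale_set s (Gamma_c \<psi> \<tau>))"
  then obtain s x y where s1: "s > 1" and p: "p = (x, y)" and "(x, y) \<in> scale_set s (Gamma_c \<psi> \<tau>)"
    by (metis UN_E greaterThan_iff surj_pair)
  then obtain \<Omega> where I: "\<tau> * \<Omega> \<in> I_c \<psi>" and xe: "x = a_fun \<Omega> \<psi> \<tau> / s"
    and ye: "y = complex_of_real (rho_fun \<Omega> \<psi> \<tau>) * cis \<psi> / complex_of_real s"
    unfolding mem_scale by blast
  note gp = gamma_param[OF tp I ps(2)]
  define \<theta> where "\<theta> = \<bar>\<psi>\<bar> - \<tau> * \<bar>\<Omega>\<bar>"
  define m where "m = \<bar>\<Omega>\<bar>"
  define r where "r = m / (sin \<theta> * s)"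
  have t0: "0 < \<theta>" and t1: "\<theta> < \<bar>\<psi>\<bar>" and m0: "m > 0" using gp unfolding \<theta>_def m_def by auto
  have st: "sin \<theta> > 0" using t0 t1 ps by (intro sin_gt_zero) auto
  have r0: "r > 0" using st m0 s1 by (simp add: r_def)
  have xr: "x = r * cos \<theta>" unfolding xe gp(4) r_def using st m0 s1
    by (simp add: \<theta>_def m_def field_simps)
  have "rho_fun \<Omega> \<psi> \<tau> / s = r" unfolding gp(5) r_def using st m0 s1
    by (simp add: \<theta>_def m_def field_simps)
  hence yr: "y = complex_of_real r * cis \<psi>" unfolding ye cis_div by simp
  have "tau_c x y = (\<bar>\<psi>\<bar> - \<theta>) / (r * sin \<theta>)" unfolding xr yr by (rule polar_point(3)[OF r0 t0 t1 ps])
  also have "\<dots> = \<tau> * s" unfolding r_def using st m0 s1 tp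
    by (simp add: \<theta>_def m_def field_simps)
  also have "\<dots> > \<tau>" using s1 tp by simp
  finally have "tau_c x y > \<tau>" .
  moreover have "(x, y) \<in> D_c" "Arg y = \<psi>" unfolding xr yr using polar_point[OF r0 t0 t1 ps] by auto
  ultimately show "p \<in> {(a, w) \<in> D_c. Arg w = \<psi> \<and> tau_c a w > \<tau>}" using p by auto
qed

theorem mainTheorem19:
  fixes \<psi> \<tau> :: real
  assumes "-pi < \<psi>" and "\<psi> \<le> pi" and "\<tau> > 0"
  shows "{(a, w) \<in> D_c. Arg w = \<psi> \<and> tau_c a w > \<tau>} = (\<Union>s\<in>{1<..}. scale_set s (Gamma_c \<psi> \<tau>))
     \<and> {(a, w) \<in> D_c. tau_c a w > \<tau>} = (\<Union>\<psi>'\<in>{-pi<..pi}. \<Union>s\<in>{1<..}. scale_set s (Gamma_c \<psi>' \<tau>))"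
proof
  show "{(a, w) \<in> D_c. Arg w = \<psi> \<and> tau_c a w > \<tau>} = (\<Union>s\<in>{1<..}. scale_set s (Gamma_c \<psi> \<tau>))"
    using main_psi assms by blast
  have "{(a, w) \<in> D_c. tau_c a w > \<tau>} = (\<Union>\<psi>'\<in>{-pi<..pi}. {(a, w) \<in> D_c. Arg w = \<psi>' \<and> tau_c a w > \<tau>})"
    using mpi_less_Arg Arg_le_pi by fastforce
  also have "\<dots> = (\<Union>\<psi>'\<in>{-pi<..pi}. \<Union>s\<in>{1<..}. scale_set s (Gamma_c \<psi>' \<tau>))"
    using main_psi assms(3) by (intro SUP_cong) auto
  finally show "{(a, w) \<in> D_c. tau_c a w > \<tau>} = (\<Union>\<psi>'\<in>{-pi<..pi}. \<Union>s\<in>{1<..}. scale_set s (Gamma_c \<psi>' \<tau>))" .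
qed

end
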